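(* Let $m\neq0$, $A\in\mathbb{C}^{2\times2}$, and let $z$ be an eigenvalue of $D_A$. Then $z$ has geometric multiplicity one, except when $A=\begin{pmatrix}\alpha&0\\0&-4/\alpha\end{pmatrix}$ for some $\alpha\in\mathbb{C}\setminus\{0\}$; in this exceptional case the geometric multiplicity of $z$ equals $2$ and $D_A$ has no other eigenvalues.
   Context: Let $\sigma_1=\begin{pmatrix}0&1\\1&0\end{pmatrix}$, $\sigma_3=\begin{pmatrix}1&0\\0&-1\end{pmatrix}$, $m\in\mathbb{R}$. Identify $L^2(\mathbb{R};\mathbb{C}^2)=L^2(\mathbb{R}_-;\mathbb{C}^2)\oplus L^2(\mathbb{R}_+;\mathbb{C}^2)$; for $\psi=\psi_-\oplus\psi_+\in H^1(\mathbb{R}_-;\mathbb{C}^2)\oplus H^1(\mathbb{R}_+;\mathbb{C}^2)$, $\psi(0_\pm)$ are the one-sided traces at $0$. Let $\mathscr{D}=-i\sigma_1\frac{d}{dx}+m\sigma_3$, and let $D_A$ be the operator with domain $\{\psi\in H^1(\mathbb{R}_-;\mathbb{C}^2)\oplus H^1(\mathbb{R}_+;\mathbb{C}^2) : (2i\sigma_1-A)\psi(0_+)=(2i\sigma_1+A)\psi(0_-)\}$ acting as $D_A\psi=\mathscr{D}\psi_-\oplus\mathscr{D}\psi_+$. *)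

theory Defs
  imports "HOL-Analysis.Analysis" "HOL-Library.Function_Algebras"
begin

definition sigma1 :: "complex^2^2" where
  "sigma1 = (\<chi> i j. if i = j then 0 else 1)"

definition sigma3 :: "complex^2^2" where
  "sigma3 = (\<chi> i j. if i = j then (if i = 1 then 1 else -1) else 0)"

definition L2_on :: "real set \<Rightarrow> (real \<Rightarrow> complex^2) \<Rightarrow> bool" where
  "L2_on S f \<longleftrightarrow>
     (\<lambda>x. indicator S x *\<^sub>R f x) \<in> borel_measurable lborel \<and>
     set_integrable lborel S (\<lambda>x. (norm (f x))\<^sup>2)"

text \<open>f (restricted to [0,oo)) is the absolutely continuous representative of an element
  of H^1(R_+; C^2) with weak derivative g; f 0 is the one-sided trace psi(0+).\<close>

definition H1_pos :: "(real \<Rightarrow> complex^2) \<Rightarrow> (real \<Rightarrow> complex^2) \<Rightarrow> bool" where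
  "H1_pos f g \<longleftrightarrow> L2_on {0<..} f \<and> L2_on {0<..} g \<and>
     (\<forall>x\<ge>0. (g has_integral (f x - f 0)) {0..x})"

text \<open>Same on (-oo,0]; f 0 is the one-sided trace psi(0-).\<close>

definition H1_neg :: "(real \<Rightarrow> complex^2) \<Rightarrow> (real \<Rightarrow> complex^2) \<Rightarrow> bool" where
  "H1_neg f g \<longleftrightarrow> L2_on {..<0} f \<and> L2_on {..<0} g \<and>
     (\<forall>x\<le>0. (g has_integral (f 0 - f x)) {x..0})"

definition dirac_expr :: "real \<Rightarrow> (real \<Rightarrow> complex^2) \<Rightarrow> (real \<Rightarrow> complex^2) \<Rightarrow> real \<Rightarrow> complex^2" where
  "dirac_expr m f g x = (- \<i>) *s (sigma1 *v g x) + (complex_of_real m) *s (sigma3 *v f x)"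

text \<open>An element psi = psi_- (+) psi_+ of the domain is represented by the pair
  (fm, fp) of its continuous representatives on the closed half-lines (-oo,0] and [0,oo),
  extended by zero outside; this identifies elements of L^2 bijectively.\<close>

definition eigenspace_DA :: "real \<Rightarrow> complex^2^2 \<Rightarrow> complex \<Rightarrow>
    ((real \<Rightarrow> complex^2) \<times> (real \<Rightarrow> complex^2)) set" where
  "eigenspace_DA m A z = {(fm, fp).
     (\<forall>x>0. fm x = 0) \<and> (\<forall>x<0. fp x = 0) \<and>
     (\<exists>gm gp. H1_neg fm gm \<and> H1_pos fp gp \<and>
        (AE x in lborel. x < 0 \<longrightarrow> dirac_expr m fm gm x = z *s fm x) \<and>
        (AE x in lborel. x > 0 \<longrightarrow> dirac_expr m fp gp x = z *s fp x)) \<and>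
     (2 * \<i>) *s (sigma1 *v fp 0) - A *v fp 0 = (2 * \<i>) *s (sigma1 *v fm 0) + A *v fm 0}"

definition is_eigenvalue_DA :: "real \<Rightarrow> complex^2^2 \<Rightarrow> complex \<Rightarrow> bool" where
  "is_eigenvalue_DA m A z \<longleftrightarrow> (\<exists>\<psi>\<in>eigenspace_DA m A z. \<psi> \<noteq> 0)"

definition scaleP :: "complex \<Rightarrow> (real \<Rightarrow> complex^2) \<times> (real \<Rightarrow> complex^2) \<Rightarrow>
    (real \<Rightarrow> complex^2) \<times> (real \<Rightarrow> complex^2)" where
  "scaleP c p = ((\<lambda>x. c *s fst p x), (\<lambda>x. c *s snd p x))"

definition geom_mult_DA :: "real \<Rightarrow> complex^2^2 \<Rightarrow> complex \<Rightarrow> nat" where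
  "geom_mult_DA m A z = vector_space.dim scaleP (eigenspace_DA m A z)"

definition diag2 :: "complex \<Rightarrow> complex \<Rightarrow> complex^2^2" where
  "diag2 a b = (\<chi> i j. if i = j then (if i = 1 then a else b) else 0)"

end

theory Submission
  imports Defs
begin
lemma vs: "vector_space scaleP"
  by unfold_locales (auto simp: scaleP_def vector_add_ldistrib vector_sadd_rdistrib vector_smult_assoc fun_eq_iff prod_eq_iff)

lemma dim1:
  assumes "p \<in> E" "p \<noteq> 0" "\<And>q. q \<in> E \<Longrightarrow> \<exists>c. q = scaleP c p"
  shows "vector_space.dim scaleP E = 1"
proof -
  interpret v: vector_space scaleP by (rule vs)
  have sub: "E \<subseteq> v.span {p}"
  proof
    fix r assume "r \<in> E"
    then obtain c where "r = scaleP c p" using assms(3) by blast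
    then show "r \<in> v.span {p}" unfolding v.span_singleton by blast
  qed
  have ind: "v.independent {p}"
    using assms(2) by (simp add: v.independent_insert)
  show ?thesis
    by (rule v.dim_unique[of "{p}"]) (use assms(1) sub ind in auto)
qed

lemma dim2:
  assumes "p \<in> E" "q \<in> E" "p \<noteq> 0" "\<And>c. q \<noteq> scaleP c p" "\<And>r. r \<in> E \<Longrightarrow> \<exists>a b. r = scaleP a p + scaleP b q"
  shows "vector_space.dim scaleP E = 2"
proof -
  interpret v: vector_space scaleP by (rule vs)
  have pq: "p \<noteq> q" using assms(4)[of 1] by (auto simp: scaleP_def)
  have sub: "E \<subseteq> v.span {q, p}"
  proof
    fix r assume "r \<in> E"
    then obtain a b where r: "r = scaleP a p + scaleP b q" using assms(5) by blast
    have "r - scaleP b q \<in> v.span {p}" unfolding v.span_singleton using r by auto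
    then show "r \<in> v.span {q, p}" unfolding v.span_insert[of q] by blast
  qed
  have nq: "q \<notin> v.span {p}" unfolding v.span_singleton using assms(4) by auto
  have ind: "v.independent {q, p}"
    using assms(3) nq pq by (simp add: v.independent_insert)
  show ?thesis
    by (rule v.dim_unique[of "{q,p}"]) (use assms(1,2) sub ind pq in auto)
qed

definition dotc :: "complex^2 \<Rightarrow> complex^2 \<Rightarrow> complex" where
  "dotc l v = l$1 * v$1 + l$2 * v$2"

lemma bl_dotc: "bounded_linear (dotc l)"
  unfolding dotc_def
  by (intro bounded_linear_add bounded_linear_compose[OF bounded_linear_mult_right bounded_linear_vec_nth])

lemma dotc_diff: "dotc l (a - b) = dotc l a - dotc l b"
  by (simp add: dotc_def algebra_simps)

lemma AE_negligible:
  assumes "AE x in lborel. P x"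
  obtains N where "negligible N" "\<And>x. x \<notin> N \<Longrightarrow> P x"
proof -
  from assms obtain N where N: "{x \<in> space lborel. \<not> P x} \<subseteq> N" "emeasure lborel N = 0" "N \<in> sets lborel"
    by (rule AE_E)
  then have "N \<in> null_sets lborel" by auto
  then have "negligible N"
    using negligible_iff_null_sets null_sets_completionI by blast
  then show ?thesis using N(1) that by auto
qed

lemma core_pos:
  fixes f g :: "real \<Rightarrow> complex^2"
  assumes I: "\<forall>x\<ge>0. (g has_integral (f x - f 0)) {0..x}"
    and ae: "AE x in lborel. x > 0 \<longrightarrow> dotc l (g x) = c * dotc l (f x)"
    and x: "x \<ge> 0"
  shows "dotc l (f x) = exp (c * x) * dotc l (f 0)"
proof -
  define h where "h = (\<lambda>t. dotc l (f t))"
  define G where "G = (\<lambda>t. dotc l (g t))"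
  obtain N where N: "negligible N" "\<And>t. t \<notin> N \<Longrightarrow> t > 0 \<longrightarrow> G t = c * h t"
    using ae unfolding G_def h_def by (rule AE_negligible) blast
  have hG: "(G has_integral (h t - h 0)) {0..t}" if "t \<ge> 0" for t
  proof -
    have "((dotc l \<circ> g) has_integral dotc l (f t - f 0)) {0..t}"
      by (rule has_integral_linear[OF _ bl_dotc]) (use I that in auto)
    then show ?thesis by (simp add: G_def h_def o_def dotc_diff)
  qed
  have hc: "((\<lambda>s. c * h s) has_integral (h t - h 0)) {0..t}" if "t \<ge> 0" for t
  proof (rule has_integral_spike[OF _ _ hG[OF that]])
    show "negligible (N \<union> {0})" using N(1) by auto
    show "\<And>s. s \<in> {0..t} - (N \<union> {0}) \<Longrightarrow> c * h s = G s"
      using N(2) by force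
  qed
  have cont: "continuous_on {0..x} h"
  proof -
    have "G integrable_on {0..x}" using hG[OF x] by blast
    then have "continuous_on {0..x} (\<lambda>t. integral {0..t} G)"
      by (rule indefinite_integral_continuous_1)
    then have "continuous_on {0..x} (\<lambda>t. h 0 + integral {0..t} G)"
      by (intro continuous_intros)
    moreover have "\<forall>t\<in>{0..x}. h 0 + integral {0..t} G = h t"
    proof
      fix t assume "t \<in> {0..x}"
      then have "integral {0..t} G = h t - h 0" using hG by (simp add: integral_unique)
      then show "h 0 + integral {0..t} G = h t" by simp
    qed
    ultimately show ?thesis using continuous_on_eq by blast
  qed
  have der: "(h has_vector_derivative c * h t) (at t within {0..x})" if t: "t \<in> {0..x}" for t
  proof -
    have "continuous_on {0..x} (\<lambda>s. c * h s)" using cont by (intro continuous_intros)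
    then have "((\<lambda>u. integral {0..u} (\<lambda>s. c * h s)) has_vector_derivative c * h t) (at t within {0..x})"
      using t by (rule integral_has_vector_derivative)
    then have "((\<lambda>u. h 0 + integral {0..u} (\<lambda>s. c * h s)) has_vector_derivative c * h t) (at t within {0..x})"
      by (intro derivative_eq_intros) auto
    then show ?thesis
    proof (rule has_vector_derivative_transform[OF t, rotated])
      fix u assume "u \<in> {0..x}"
      then have "integral {0..u} (\<lambda>s. c * h s) = h u - h 0" by (intro integral_unique hc) auto
      then show "h u = h 0 + integral {0..u} (\<lambda>s. c * h s)" by (metis add.commute diff_add_cancel)
    qed
  qed
  define q where "q = (\<lambda>t. exp (- c * of_real t) * h t)"
  have dq: "(q has_derivative (\<lambda>_. 0)) (at t within {0..x})" if t: "t \<in> {0..x}" for t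
  proof -
    have e: "((\<lambda>t. exp (- c * of_real t)) has_vector_derivative (- c * exp (- c * of_real t))) (at t within {0..x})"
      by (rule has_vector_derivative_real_field) (auto intro!: derivative_eq_intros)
    have "(q has_vector_derivative (exp (- c * of_real t) * (c * h t) + (- c * exp (- c * of_real t)) * h t)) (at t within {0..x})"
      unfolding q_def by (rule has_vector_derivative_mult[OF e der[OF t]])
    then have "(q has_vector_derivative 0) (at t within {0..x})"
      by (simp add: algebra_simps)
    then show ?thesis by (simp add: has_vector_derivative_def)
  qed
  obtain k where k: "\<forall>t\<in>{0..x}. q t = k"
    using has_derivative_zero_constant[of "{0..x}" q] dq by auto
  have "q x = q 0" using k x by auto
  then have "exp (- c * of_real x) * h x = h 0" by (simp add: q_def)
  then have "h x = exp (c * of_real x) * h 0"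
    by (metis (no_types, lifting) exp_minus_inverse mult.assoc mult.left_commute mult_1 mult_minus_left)
  then show ?thesis by (simp add: h_def)
qed

lemma L2_pos_contra:
  fixes f :: "real \<Rightarrow> complex^2"
  assumes si: "set_integrable lborel {0<..} (\<lambda>x. (norm (f x))\<^sup>2)"
    and lb: "\<forall>x>0. e \<le> norm (f x)" and e: "e > 0"
  shows False
proof -
  define g where "g = (\<lambda>x. indicator {0<..} x *\<^sub>R (norm (f x))\<^sup>2 :: real)"
  have "integrable lborel g" using si unfolding set_integrable_def g_def .
  then have fin: "(\<integral>\<^sup>+x. ennreal (norm (g x)) \<partial>lborel) < \<infinity>"
    by (simp add: integrable_iff_bounded)
  have bnd: "ennreal (e\<^sup>2 * real n) \<le> (\<integral>\<^sup>+x. ennreal (norm (g x)) \<partial>lborel)" for n :: nat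
  proof -
    have "(\<integral>\<^sup>+x. ennreal (e\<^sup>2) * indicator {1..1 + real n} x \<partial>lborel) = ennreal (e\<^sup>2) * emeasure lborel {1..1 + real n}"
      by (rule nn_integral_cmult_indicator) auto
    also have "\<dots> = ennreal (e\<^sup>2 * real n)"
      by (simp add: ennreal_mult)
    finally have eq: "(\<integral>\<^sup>+x. ennreal (e\<^sup>2) * indicator {1..1 + real n} x \<partial>lborel) = ennreal (e\<^sup>2 * real n)" .
    have "(\<integral>\<^sup>+x. ennreal (e\<^sup>2) * indicator {1..1 + real n} x \<partial>lborel) \<le> (\<integral>\<^sup>+x. ennreal (norm (g x)) \<partial>lborel)"
    proof (rule nn_integral_mono)
      fix x
      show "ennreal (e\<^sup>2) * indicator {1..1 + real n} x \<le> ennreal (norm (g x))"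
      proof (cases "x \<in> {1..1 + real n}")
        case True
        then have "x > 0" by auto
        then have "e\<^sup>2 \<le> (norm (f x))\<^sup>2" using lb e by (auto intro!: power_mono)
        then show ?thesis using True \<open>x > 0\<close> by (auto simp: g_def)
      qed auto
    qed
    then show ?thesis using eq by simp
  qed
  obtain r where r: "(\<integral>\<^sup>+x. ennreal (norm (g x)) \<partial>lborel) = ennreal r" "r \<ge> 0"
    using fin by (cases "(\<integral>\<^sup>+x. ennreal (norm (g x)) \<partial>lborel)") auto
  obtain n :: nat where n: "r / e\<^sup>2 < real n" using reals_Archimedean2 by blast
  have "e\<^sup>2 * real n \<le> r" using bnd[of n] r by (simp add: ennreal_le_iff)
  moreover have "r < e\<^sup>2 * real n" using n e by (simp add: field_simps)
  ultimately show False by simp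
qed

lemma mv2: fixes M :: "'a::semiring_1^2^2" shows "(M *v v) $ 1 = M$1$1 * v$1 + M$1$2 * v$2" "(M *v v)$2 = M$2$1 * v$1 + M$2$2 * v$2"
  by (simp_all add: matrix_vector_mult_def sum_2)

lemma sig: "sigma1$1$1 = 0" "sigma1$1$2 = 1" "sigma1$2$1 = 1" "sigma1$2$2 = 0"
  "sigma3$1$1 = 1" "sigma3$1$2 = 0" "sigma3$2$1 = 0" "sigma3$2$2 = -1"
  by (simp_all add: sigma1_def sigma3_def)

lemma vec2_eq: "(v::'a^2) = w \<longleftrightarrow> v$1 = w$1 \<and> v$2 = w$2"
  by (auto simp: vec_eq_iff forall_2)

lemma negi: "(- \<i> * b = (a::complex)) \<longleftrightarrow> (b = \<i> * a)"
  by (metis complex_i_mult_minus minus_minus mult.assoc mult_minus_left)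

lemma dirac_iff:
  "dirac_expr m f g x = z *s f x \<longleftrightarrow>
     (g x $1 = \<i> * (z + of_real m) * f x $2 \<and> g x $2 = \<i> * (z - of_real m) * f x $1)"
proof -
  have "dirac_expr m f g x = z *s f x \<longleftrightarrow>
     (- \<i> * g x $2 = (z - of_real m) * f x $1 \<and> - \<i> * g x $1 = (z + of_real m) * f x $2)"
    by (simp add: dirac_expr_def vec2_eq mv2 sig) (rule conj_cong; rule iffI; algebra)
  also have "\<dots> \<longleftrightarrow> (g x $1 = \<i> * (z + of_real m) * f x $2 \<and> g x $2 = \<i> * (z - of_real m) * f x $1)"
    unfolding negi by (auto simp: mult.assoc)
  finally show ?thesis .
qed

lemma my_nth_le: "norm ((x::'a::real_normed_vector^'n) $ i) \<le> norm x"
  unfolding norm_vec_def by (rule member_le_L2_set) simp_all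

lemma zero_lemma_pos:
  fixes f g :: "real \<Rightarrow> complex^2"
  assumes I: "\<forall>x\<ge>0. (g has_integral (f x - f 0)) {0..x}"
   and L: "L2_on {0<..} f"
   and ae: "AE x in lborel. x > 0 \<longrightarrow> dotc l (g x) = c * dotc l (f x)"
   and c: "Re c \<ge> 0"
  shows "dotc l (f 0) = 0"
proof (rule ccontr)
  assume h0: "dotc l (f 0) \<noteq> 0"
  define C where "C = norm (l$1) + norm (l$2)"
  have bnd: "norm (dotc l v) \<le> C * norm v" for v
  proof -
    have "norm (dotc l v) \<le> norm (l$1) * norm (v$1) + norm (l$2) * norm (v$2)"
      unfolding dotc_def using norm_triangle_ineq[of "l$1 * v$1" "l$2 * v$2"] by (simp add: norm_mult)
    also have "\<dots> \<le> norm (l$1) * norm v + norm (l$2) * norm v"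
      using my_nth_le[of v 1] my_nth_le[of v 2] by (simp add: add_mono mult_left_mono)
    finally show ?thesis by (simp add: C_def algebra_simps)
  qed
  have Cpos: "C > 0"
  proof -
    have "C \<ge> 0" by (simp add: C_def)
    moreover have "C \<noteq> 0"
    proof
      assume "C = 0"
      then have "l$1 = 0" "l$2 = 0" unfolding C_def
        by (simp_all add: add_nonneg_eq_0_iff)
      then show False using h0 by (simp add: dotc_def)
    qed
    ultimately show ?thesis by simp
  qed
  have lb: "\<forall>x>0. norm (dotc l (f 0)) / C \<le> norm (f x)"
  proof (intro allI impI)
    fix x :: real assume x: "x > 0"
    have "dotc l (f x) = exp (c * of_real x) * dotc l (f 0)"
      by (rule core_pos[OF I ae]) (use x in simp)
    then have "norm (dotc l (f x)) = exp (Re c * x) * norm (dotc l (f 0))"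
      by (simp add: norm_mult norm_exp_eq_Re)
    moreover have "exp (Re c * x) \<ge> 1" using c x by simp
    ultimately have "norm (dotc l (f 0)) \<le> norm (dotc l (f x))"
      using mult_right_mono[of 1 "exp (Re c * x)" "norm (dotc l (f 0))"] by simp
    also have "\<dots> \<le> C * norm (f x)" by (rule bnd)
    finally show "norm (dotc l (f 0)) / C \<le> norm (f x)" using Cpos by (simp add: field_simps)
  qed
  have si: "set_integrable lborel {0<..} (\<lambda>x. (norm (f x))\<^sup>2)" using L by (simp add: L2_on_def)
  have "norm (dotc l (f 0)) / C > 0" using h0 Cpos by simp
  then show False using L2_pos_contra[OF si lb] by blast
qed

lemma dotc_vec[simp]: "dotc (vector [a,b]) v = a * v$1 + b * v$2"
  by (simp add: dotc_def)

lemma ae_comp: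
  assumes "AE x in lborel. x > 0 \<longrightarrow> dirac_expr m f g x = z *s f x"
  shows "AE x in lborel. x > 0 \<longrightarrow> g x $1 = \<i> * (z + of_real m) * f x $2 \<and> g x $2 = \<i> * (z - of_real m) * f x $1"
  using assms by (rule eventually_mono) (simp add: dirac_iff)

lemma ae_dotc:
  assumes "AE x in lborel. x > 0 \<longrightarrow> g x $1 = \<i> * s * f x $2 \<and> g x $2 = \<i> * t * f x $1"
    and "b * (\<i> * t) = c * a" "a * (\<i> * s) = c * b"
  shows "AE x in lborel. x > 0 \<longrightarrow> dotc (vector [a,b]) (g x) = c * dotc (vector [a,b]) (f x)"
  using assms(1)
proof (rule eventually_mono, intro impI)
  fix x assume "x > 0 \<longrightarrow> g x $1 = \<i> * s * f x $2 \<and> g x $2 = \<i> * t * f x $1" "x > 0"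
  then have g: "g x $1 = \<i> * s * f x $2" "g x $2 = \<i> * t * f x $1" by auto
  have "a * g x $1 + b * g x $2 = (a * (\<i> * s)) * f x $2 + (b * (\<i> * t)) * f x $1"
    by (simp add: g algebra_simps)
  also have "\<dots> = c * (a * f x $1 + b * f x $2)"
    unfolding assms(2,3) by (simp add: algebra_simps)
  finally show "dotc (vector [a,b]) (g x) = c * dotc (vector [a,b]) (f x)" by simp
qed

lemma H1_posD:
  assumes "H1_pos f g"
  shows "\<forall>x\<ge>0. (g has_integral (f x - f 0)) {0..x}" "L2_on {0<..} f"
  using assms by (auto simp: H1_pos_def)

lemma pos_struct:
  fixes f g :: "real \<Rightarrow> complex^2" and k z :: complex
  assumes H: "H1_pos f g" and ae: "AE x in lborel. x > 0 \<longrightarrow> dirac_expr m f g x = z *s f x"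
    and k2: "k^2 = (of_real m)^2 - z^2" and rk: "Re k \<ge> 0" and m: "m \<noteq> 0"
  shows "(k = 0 \<longrightarrow> (\<forall>x\<ge>0. f x = 0)) \<and>
         (k \<noteq> 0 \<longrightarrow> k * f 0 $1 + \<i> * (z + of_real m) * f 0 $2 = 0 \<and>
             (\<forall>x\<ge>0. f x = exp (- k * of_real x) *s f 0))"
proof -
  note I = H1_posD(1)[OF H] and L = H1_posD(2)[OF H]
  define s where "s = z + of_real m"
  define t where "t = z - of_real m"
  have ae': "AE x in lborel. x > 0 \<longrightarrow> g x $1 = \<i> * s * f x $2 \<and> g x $2 = \<i> * t * f x $1"
    using ae_comp[OF ae] unfolding s_def t_def .
  have st: "s * t = - (k^2)" using k2 by (simp add: s_def t_def power2_eq_square algebra_simps)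
  show ?thesis
  proof (intro conjI impI)
    assume k0: "k = 0"
    then have "s * t = 0" using st by simp
    then have "s = 0 \<or> t = 0" by simp
    then show "\<forall>x\<ge>0. f x = 0"
    proof
      assume s0: "s = 0"
      have a1: "AE x in lborel. x > 0 \<longrightarrow> dotc (vector [1,0]) (g x) = 0 * dotc (vector [1,0]) (f x)"
        by (rule ae_dotc[OF ae']) (simp_all add: s0)
      have z1: "\<forall>x\<ge>0. f x $1 = 0"
        using zero_lemma_pos[OF I L a1] core_pos[OF I a1] by simp
      have a2: "AE x in lborel. x > 0 \<longrightarrow> dotc (vector [0,1]) (g x) = 0 * dotc (vector [0,1]) (f x)"
        using ae' by (rule eventually_mono) (use z1 in auto)
      have z2: "\<forall>x\<ge>0. f x $2 = 0"
        using zero_lemma_pos[OF I L a2] core_pos[OF I a2] by simp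
      show ?thesis using z1 z2 by (simp add: vec2_eq)
    next
      assume t0: "t = 0"
      have a1: "AE x in lborel. x > 0 \<longrightarrow> dotc (vector [0,1]) (g x) = 0 * dotc (vector [0,1]) (f x)"
        by (rule ae_dotc[OF ae']) (simp_all add: t0)
      have z2: "\<forall>x\<ge>0. f x $2 = 0"
        using zero_lemma_pos[OF I L a1] core_pos[OF I a1] by simp
      have a2: "AE x in lborel. x > 0 \<longrightarrow> dotc (vector [1,0]) (g x) = 0 * dotc (vector [1,0]) (f x)"
        using ae' by (rule eventually_mono) (use z2 in auto)
      have z1: "\<forall>x\<ge>0. f x $1 = 0"
        using zero_lemma_pos[OF I L a2] core_pos[OF I a2] by simp
      show ?thesis using z1 z2 by (simp add: vec2_eq)
    qed
  next
    assume k0: "k \<noteq> 0"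
    have s0: "s \<noteq> 0" using st k0 by auto
    have ap: "AE x in lborel. x > 0 \<longrightarrow> dotc (vector [k, \<i> * s]) (g x) = k * dotc (vector [k, \<i> * s]) (f x)"
      by (rule ae_dotc[OF ae']) (use st in \<open>simp_all add: power2_eq_square algebra_simps\<close>)
    have am: "AE x in lborel. x > 0 \<longrightarrow> dotc (vector [-k, \<i> * s]) (g x) = (-k) * dotc (vector [-k, \<i> * s]) (f x)"
      by (rule ae_dotc[OF ae']) (use st in \<open>simp_all add: power2_eq_square algebra_simps\<close>)
    have zp: "k * f 0 $1 + \<i> * s * f 0 $2 = 0"
      using zero_lemma_pos[OF I L ap rk] by simp
    then show "k * f 0 $1 + \<i> * (z + of_real m) * f 0 $2 = 0" by (simp add: s_def)
    show "\<forall>x\<ge>0. f x = exp (- k * of_real x) *s f 0"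
    proof (intro allI impI)
      fix x :: real assume x: "x \<ge> 0"
      define E where "E = exp (- k * of_real x)"
      have p: "k * f x $1 + \<i> * s * f x $2 = 0"
        using core_pos[OF I ap x] zp by simp
      have q: "-k * f x $1 + \<i> * s * f x $2 = E * (-k * f 0 $1 + \<i> * s * f 0 $2)"
        using core_pos[OF I am x] by (simp add: E_def)
      have "2 * \<i> * s * (f x $2 - E * f 0 $2) = 0"
        using p q zp by algebra
      then have e2: "f x $2 = E * f 0 $2" using s0 by simp
      have "2 * k * (f x $1 - E * f 0 $1) = 0"
        using p q zp by algebra
      then have e1: "f x $1 = E * f 0 $1" using k0 by simp
      show "f x = exp (- k * of_real x) *s f 0"
        using e1 e2 by (simp add: vec2_eq E_def)
    qed
  qed
qed

definition Rf :: "(real \<Rightarrow> complex^2) \<Rightarrow> real \<Rightarrow> complex^2" where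
  "Rf f = (\<lambda>t. sigma3 *v f (-t))"
definition Rg :: "(real \<Rightarrow> complex^2) \<Rightarrow> real \<Rightarrow> complex^2" where
  "Rg g = (\<lambda>t. - (sigma3 *v g (-t)))"

lemma s3v: "(sigma3 *v v) $1 = v$1" "(sigma3 *v v) $2 = - v$2"
  by (simp_all add: mv2 sig)

lemma norm_s3v: "norm (sigma3 *v v) = norm v"
  unfolding norm_vec_def
  by (rule L2_set_cong) (auto simp: UNIV_2 s3v)

lemma AE_reflect:
  assumes "AE x in lborel. P x"
  shows "AE x in lborel. P (- x :: real)"
proof -
  from assms obtain N where N: "{x \<in> space lborel. \<not> P x} \<subseteq> N" "emeasure lborel N = 0" "N \<in> sets lborel"
    by (rule AE_E)
  have meas: "(uminus :: real \<Rightarrow> real) \<in> measurable lborel borel" by simp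
  have "emeasure lborel (uminus -` N \<inter> space lborel) = emeasure (distr lborel borel uminus) N"
    using emeasure_distr[OF meas, of N] N(3) by simp
  also have "\<dots> = 0" using N(2) by (simp add: lborel_distr_uminus)
  finally have z: "emeasure lborel (uminus -` N) = 0" by simp
  have "uminus -` N \<inter> space lborel \<in> sets lborel"
    by (rule measurable_sets[OF meas]) (use N(3) in simp)
  then have "uminus -` N \<in> sets lborel" by simp
  then have "uminus -` N \<in> null_sets lborel" using z by auto
  then show ?thesis
    by (rule AE_I') (use N(1) in auto)
qed

lemma L2_reflect:
  assumes L: "L2_on S f" and T: "\<And>x. x \<in> T \<longleftrightarrow> - x \<in> S"
  shows "L2_on T (Rf f)"
proof -
  have m: "(\<lambda>x. indicator S x *\<^sub>R f x) \<in> borel_measurable lborel"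
    and i: "integrable lborel (\<lambda>x. indicator S x *\<^sub>R (norm (f x))\<^sup>2)"
    using L by (auto simp: L2_on_def set_integrable_def)
  have eq1: "(\<lambda>x. indicator T x *\<^sub>R Rf f x) = (\<lambda>x. sigma3 *v ((\<lambda>x. indicator S x *\<^sub>R f x) (-x)))"
    by (auto simp: Rf_def indicator_def T fun_eq_iff)
  have "(\<lambda>x. (\<lambda>x. indicator S x *\<^sub>R f x) (-x)) \<in> borel_measurable lborel"
    using m by measurable
  then have "(\<lambda>x. sigma3 *v ((\<lambda>x. indicator S x *\<^sub>R f x) (-x))) \<in> borel_measurable lborel"
    by (rule measurable_compose[OF _ borel_measurable_continuous_onI])
       (intro continuous_intros)
  then have M: "(\<lambda>x. indicator T x *\<^sub>R Rf f x) \<in> borel_measurable lborel" using eq1 by simp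
  have eq2: "(\<lambda>x. indicator T x *\<^sub>R (norm (Rf f x))\<^sup>2) = (\<lambda>x. (\<lambda>x. indicator S x *\<^sub>R (norm (f x))\<^sup>2) (0 + (-1) * x))"
    by (auto simp: Rf_def indicator_def T fun_eq_iff norm_s3v)
  have "integrable lborel (\<lambda>x. indicator T x *\<^sub>R (norm (Rf f x))\<^sup>2)"
    unfolding eq2 using lborel_integrable_real_affine_iff[of "-1" "\<lambda>x. indicator S x *\<^sub>R (norm (f x))\<^sup>2" 0] i by simp
  then show ?thesis using M by (simp add: L2_on_def set_integrable_def)
qed

lemma Rf_comp[simp]: "Rf f x $1 = f (-x) $1" "Rf f x $2 = - f (-x) $2"
  by (simp_all add: Rf_def s3v)
lemma Rg_comp[simp]: "Rg g x $1 = - g (-x) $1" "Rg g x $2 = g (-x) $2"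
  by (simp_all add: Rg_def s3v)

lemma Rg_Rf: "Rg g = Rf (\<lambda>t. - g t)"
  by (auto simp: fun_eq_iff vec2_eq)

lemma L2_uminus:
  assumes "L2_on S g" shows "L2_on S (\<lambda>t. - g t)"
proof -
  have m: "(\<lambda>x. indicator S x *\<^sub>R g x) \<in> borel_measurable lborel"
    using assms by (auto simp: L2_on_def)
  have "(\<lambda>x. - (indicator S x *\<^sub>R g x)) \<in> borel_measurable lborel"
    using m by measurable
  then show ?thesis using assms by (simp add: L2_on_def)
qed

lemma bl_ms3: "bounded_linear (\<lambda>v::complex^2. - (sigma3 *v v))"
  using bounded_linear_minus[OF matrix_vector_mul_bounded_linear[of sigma3]] by simp

lemma dirac_reflect:
  assumes "AE x in lborel. P x \<longrightarrow> dirac_expr m f g x = z *s f x"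
  shows "AE x in lborel. P (-x) \<longrightarrow> dirac_expr m (Rf f) (Rg g) x = z *s Rf f x"
  using AE_reflect[OF assms] by (rule eventually_mono) (auto simp: dirac_iff)

lemma neg_to_pos:
  assumes H: "H1_neg f g"
  shows "H1_pos (Rf f) (Rg g)"
proof -
  have L1: "L2_on {..<0} f" and L2: "L2_on {..<0} g"
    and I: "\<forall>x\<le>0. (g has_integral (f 0 - f x)) {x..0}" using H by (auto simp: H1_neg_def)
  have "L2_on {0<..} (Rf f)" by (rule L2_reflect[OF L1]) auto
  moreover have "L2_on {0<..} (Rg g)" unfolding Rg_Rf by (rule L2_reflect[OF L2_uminus[OF L2]]) auto
  moreover have "(Rg g has_integral (Rf f x - Rf f 0)) {0..x}" if x: "x \<ge> 0" for x
  proof -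
    have "(g has_integral (f 0 - f (-x))) {-x..0}" using I x by auto
    then have "((\<lambda>t. g (-t)) has_integral (f 0 - f (-x))) {-0..- (-x)}"
      by (subst has_integral_reflect_real)
    then have "((\<lambda>t. g (-t)) has_integral (f 0 - f (-x))) {0..x}" by simp
    from has_integral_linear[OF this bl_ms3]
    have "((\<lambda>t. - (sigma3 *v g (-t))) has_integral - (sigma3 *v (f 0 - f (-x)))) {0..x}"
      by (simp add: o_def)
    moreover have "- (sigma3 *v (f 0 - f (-x))) = Rf f x - Rf f 0"
      by (simp add: vec2_eq s3v)
    ultimately show ?thesis by (simp add: Rg_def)
  qed
  ultimately show ?thesis by (auto simp: H1_pos_def)
qed

lemma pos_to_neg:
  assumes H: "H1_pos f g"
  shows "H1_neg (Rf f) (Rg g)"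
proof -
  have L1: "L2_on {0<..} f" and L2: "L2_on {0<..} g"
    and I: "\<forall>x\<ge>0. (g has_integral (f x - f 0)) {0..x}" using H by (auto simp: H1_pos_def)
  have "L2_on {..<0} (Rf f)" by (rule L2_reflect[OF L1]) auto
  moreover have "L2_on {..<0} (Rg g)" unfolding Rg_Rf by (rule L2_reflect[OF L2_uminus[OF L2]]) auto
  moreover have "(Rg g has_integral (Rf f 0 - Rf f x)) {x..0}" if x: "x \<le> 0" for x
  proof -
    have "(g has_integral (f (-x) - f 0)) {0..-x}" using I x by auto
    then have "((\<lambda>t. g (-t)) has_integral (f (-x) - f 0)) {- (-x)..-0}"
      by (subst has_integral_reflect_real)
    then have "((\<lambda>t. g (-t)) has_integral (f (-x) - f 0)) {x..0}" by simp
    from has_integral_linear[OF this bl_ms3]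
    have "((\<lambda>t. - (sigma3 *v g (-t))) has_integral - (sigma3 *v (f (-x) - f 0))) {x..0}"
      by (simp add: o_def)
    moreover have "- (sigma3 *v (f (-x) - f 0)) = Rf f 0 - Rf f x"
      by (simp add: vec2_eq s3v)
    ultimately show ?thesis by (simp add: Rg_def)
  qed
  ultimately show ?thesis by (auto simp: H1_neg_def)
qed

lemma BC_comp:
  "((2 * \<i>) *s (sigma1 *v w) - A *v w = (2 * \<i>) *s (sigma1 *v u) + A *v u) \<longleftrightarrow>
    (2 * \<i> * w$2 - (A$1$1 * w$1 + A$1$2 * w$2) = 2 * \<i> * u$2 + (A$1$1 * u$1 + A$1$2 * u$2) \<and>
     2 * \<i> * w$1 - (A$2$1 * w$1 + A$2$2 * w$2) = 2 * \<i> * u$1 + (A$2$1 * u$1 + A$2$2 * u$2))"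
  by (simp add: vec2_eq mv2 sig)

lemma E_memD:
  assumes "(fm, fp) \<in> eigenspace_DA m A z"
  obtains gm gp where "\<forall>x>0. fm x = 0" "\<forall>x<0. fp x = 0" "H1_neg fm gm" "H1_pos fp gp"
    "AE x in lborel. x < 0 \<longrightarrow> dirac_expr m fm gm x = z *s fm x"
    "AE x in lborel. x > 0 \<longrightarrow> dirac_expr m fp gp x = z *s fp x"
    "(2 * \<i>) *s (sigma1 *v fp 0) - A *v fp 0 = (2 * \<i>) *s (sigma1 *v fm 0) + A *v fm 0"
  using assms unfolding eigenspace_DA_def by blast

lemma E_elem:
  fixes k :: complex
  assumes m: "m \<noteq> 0" and P: "(fm, fp) \<in> eigenspace_DA m A z"
    and k2: "k^2 = (of_real m)^2 - z^2" and rk: "Re k \<ge> 0"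
  shows "k = 0 \<Longrightarrow> fm = (\<lambda>_. 0) \<and> fp = (\<lambda>_. 0)"
   and "k \<noteq> 0 \<Longrightarrow> -k * fm 0 $1 + \<i> * (z + of_real m) * fm 0 $2 = 0 \<and>
           k * fp 0 $1 + \<i> * (z + of_real m) * fp 0 $2 = 0 \<and>
           (\<forall>x. fm x = (if x \<le> 0 then exp (k * of_real x) *s fm 0 else 0)) \<and>
           (\<forall>x. fp x = (if 0 \<le> x then exp (- k * of_real x) *s fp 0 else 0))"
proof -
  obtain gm gp where E: "\<forall>x>0. fm x = 0" "\<forall>x<0. fp x = 0" "H1_neg fm gm" "H1_pos fp gp"
    "AE x in lborel. x < 0 \<longrightarrow> dirac_expr m fm gm x = z *s fm x"
    "AE x in lborel. x > 0 \<longrightarrow> dirac_expr m fp gp x = z *s fp x"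
    using P by (rule E_memD)
  have aeR: "AE x in lborel. x > 0 \<longrightarrow> dirac_expr m (Rf fm) (Rg gm) x = z *s Rf fm x"
    using dirac_reflect[OF E(5)] by (rule eventually_mono) auto
  note PP = pos_struct[OF E(4) E(6) k2 rk m]
  note PM = pos_struct[OF neg_to_pos[OF E(3)] aeR k2 rk m]
  {
    assume k0: "k = 0"
    have "\<forall>x\<ge>0. fp x = 0" using PP k0 by blast
    then have 1: "fp = (\<lambda>_. 0)"
    proof -
      assume h: "\<forall>x\<ge>0. fp x = 0"
      show ?thesis
      proof (rule ext)
        fix x show "fp x = 0" by (cases "x \<ge> 0") (use h E(2) in auto)
      qed
    qed
    have "\<forall>x\<ge>0. Rf fm x = 0" using PM k0 by blast
    then have h: "\<forall>x\<le>0. fm x = 0"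
    proof (intro allI impI)
      fix x :: real assume "\<forall>x\<ge>0. Rf fm x = 0" "x \<le> 0"
      then have "Rf fm (-x) = 0" by simp
      then have "fm x $1 = 0" "fm x $2 = 0" by (simp_all add: vec2_eq)
      then show "fm x = 0" by (simp add: vec2_eq)
    qed
    have 2: "fm = (\<lambda>_. 0)"
    proof (rule ext)
      fix x show "fm x = 0" by (cases "x \<le> 0") (use h E(1) in auto)
    qed
    show "fm = (\<lambda>_. 0) \<and> fp = (\<lambda>_. 0)" using 1 2 by simp
  }
  {
    assume k0: "k \<noteq> 0"
    have p1: "k * fp 0 $1 + \<i> * (z + of_real m) * fp 0 $2 = 0"
     and p2: "\<forall>x\<ge>0. fp x = exp (- k * of_real x) *s fp 0" using PP k0 by blast+
    have m1: "k * Rf fm 0 $1 + \<i> * (z + of_real m) * Rf fm 0 $2 = 0"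
     and m2: "\<forall>x\<ge>0. Rf fm x = exp (- k * of_real x) *s Rf fm 0" using PM k0 by blast+
    have c1: "-k * fm 0 $1 + \<i> * (z + of_real m) * fm 0 $2 = 0" using m1 by (simp add: algebra_simps)
    have c2: "\<forall>x. fm x = (if x \<le> 0 then exp (k * of_real x) *s fm 0 else 0)"
    proof
      fix x
      show "fm x = (if x \<le> 0 then exp (k * of_real x) *s fm 0 else 0)"
      proof (cases "x \<le> 0")
        case True
        then have "Rf fm (-x) = exp (- k * of_real (-x)) *s Rf fm 0" using m2 by (metis neg_0_le_iff_le)
        then show ?thesis using True by (simp add: vec2_eq)
      next
        case False then show ?thesis using E(1) by simp
      qed
    qed
    have c3: "\<forall>x. fp x = (if 0 \<le> x then exp (- k * of_real x) *s fp 0 else 0)"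
    proof
      fix x show "fp x = (if 0 \<le> x then exp (- k * of_real x) *s fp 0 else 0)"
      proof (cases "0 \<le> x")
        case True
        then have "fp x = exp (- k * of_real x) *s fp 0" using p2 by blast
        then show ?thesis using True by simp
      next
        case False then show ?thesis using E(2) by simp
      qed
    qed
    show "-k * fm 0 $1 + \<i> * (z + of_real m) * fm 0 $2 = 0 \<and>
           k * fp 0 $1 + \<i> * (z + of_real m) * fp 0 $2 = 0 \<and>
           (\<forall>x. fm x = (if x \<le> 0 then exp (k * of_real x) *s fm 0 else 0)) \<and>
           (\<forall>x. fp x = (if 0 \<le> x then exp (- k * of_real x) *s fp 0 else 0))"
      using c1 p1 c2 c3 by blast
  }
qed

lemma s_nz:
  fixes k :: complex
  assumes "k^2 = (of_real m)^2 - z^2" "k \<noteq> 0"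
  shows "z + of_real m \<noteq> 0"
proof
  assume "z + of_real m = 0"
  then have "z = - of_real m" by (simp add: eq_neg_iff_add_eq_0)
  then have "k^2 = 0" using assms(1) by simp
  then show False using assms(2) by simp
qed

lemma E_scale_both:
  fixes k :: complex
  assumes m: "m \<noteq> 0" and P: "(fm, fp) \<in> eigenspace_DA m A z" and P': "(fm', fp') \<in> eigenspace_DA m A z"
    and k2: "k^2 = (of_real m)^2 - z^2" and rk: "Re k \<ge> 0" and k0: "k \<noteq> 0"
  shows "fm 0 $1 = c * fm' 0 $1 \<Longrightarrow> fm x = c *s fm' x"
    and "fp 0 $1 = d * fp' 0 $1 \<Longrightarrow> fp x = d *s fp' x"
proof -
  define s where "s = z + of_real m"
  have s0: "s \<noteq> 0" using s_nz[OF k2 k0] by (simp add: s_def)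
  note A = E_elem(2)[OF m P k2 rk k0, folded s_def]
  note B = E_elem(2)[OF m P' k2 rk k0, folded s_def]
  have a1: "-k * fm 0 $1 + \<i> * s * fm 0 $2 = 0" "k * fp 0 $1 + \<i> * s * fp 0 $2 = 0" using A by blast+
  have b1: "-k * fm' 0 $1 + \<i> * s * fm' 0 $2 = 0" "k * fp' 0 $1 + \<i> * s * fp' 0 $2 = 0" using B by blast+
  {
    assume c1: "fm 0 $1 = c * fm' 0 $1"
    have "\<i> * s * (fm 0 $2 - c * fm' 0 $2) = 0"
      using a1 b1 c1 by algebra
    then have u2: "fm 0 $2 = c * fm' 0 $2" using s0 by simp
    have u: "fm 0 = c *s fm' 0" using c1 u2 by (simp add: vec2_eq)
    have "fm x = (if x \<le> 0 then exp (k * of_real x) *s fm 0 else 0)" using A by blast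
    moreover have "fm' x = (if x \<le> 0 then exp (k * of_real x) *s fm' 0 else 0)" using B by blast
    ultimately show "fm x = c *s fm' x" using u by (simp add: vector_smult_assoc mult.commute)
  }
  {
    assume c2: "fp 0 $1 = d * fp' 0 $1"
    have "\<i> * s * (fp 0 $2 - d * fp' 0 $2) = 0"
      using a1 b1 c2 by algebra
    then have w2: "fp 0 $2 = d * fp' 0 $2" using s0 by simp
    have w: "fp 0 = d *s fp' 0" using c2 w2 by (simp add: vec2_eq)
    have "fp x = (if 0 \<le> x then exp (- k * of_real x) *s fp 0 else 0)" using A by blast
    moreover have "fp' x = (if 0 \<le> x then exp (- k * of_real x) *s fp' 0 else 0)" using B by blast
    ultimately show "fp x = d *s fp' x" using w by (simp add: vector_smult_assoc mult.commute)
  }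
qed

lemma E_scale:
  fixes k :: complex
  assumes m: "m \<noteq> 0" and P: "(fm, fp) \<in> eigenspace_DA m A z" and P': "(fm', fp') \<in> eigenspace_DA m A z"
    and k2: "k^2 = (of_real m)^2 - z^2" and rk: "Re k \<ge> 0" and k0: "k \<noteq> 0"
    and c1: "fm 0 $1 = c * fm' 0 $1" and c2: "fp 0 $1 = c * fp' 0 $1"
  shows "(fm, fp) = scaleP c (fm', fp')"
  using E_scale_both(1)[OF m P P' k2 rk k0 c1] E_scale_both(2)[OF m P P' k2 rk k0 c2] by (simp add: scaleP_def fun_eq_iff)

lemma key_vals:
  fixes k :: complex
  assumes m: "m \<noteq> 0" and P: "(fm, fp) \<in> eigenspace_DA m A z"
    and k2: "k^2 = (of_real m)^2 - z^2" and rk: "Re k \<ge> 0" and k0: "k \<noteq> 0"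
  shows "fp 0 $1 * (-2*k - A$1$1 * (z + of_real m) - \<i> * A$1$2 * k) = fm 0 $1 * (2*k + A$1$1 * (z + of_real m) - \<i> * A$1$2 * k)"
    and "fp 0 $1 * (2*\<i>*(z + of_real m) - A$2$1 * (z + of_real m) - \<i> * A$2$2 * k) = fm 0 $1 * (2*\<i>*(z + of_real m) + A$2$1 * (z + of_real m) - \<i> * A$2$2 * k)"
proof -
  obtain gm gp where E: "(2 * \<i>) *s (sigma1 *v fp 0) - A *v fp 0 = (2 * \<i>) *s (sigma1 *v fm 0) + A *v fm 0"
    using P by (rule E_memD)
  note BC = E[unfolded BC_comp, THEN conjunct1] E[unfolded BC_comp, THEN conjunct2]
  have ii: "\<i> * \<i> = -1" by simp
  have C: "-k * fm 0 $1 + \<i> * (z + of_real m) * fm 0 $2 = 0" "k * fp 0 $1 + \<i> * (z + of_real m) * fp 0 $2 = 0"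
    using E_elem(2)[OF m P k2 rk k0] by blast+
  show "fp 0 $1 * (-2*k - A$1$1 * (z + of_real m) - \<i> * A$1$2 * k) = fm 0 $1 * (2*k + A$1$1 * (z + of_real m) - \<i> * A$1$2 * k)"
    using BC C ii by algebra
  show "fp 0 $1 * (2*\<i>*(z + of_real m) - A$2$1 * (z + of_real m) - \<i> * A$2$2 * k) = fm 0 $1 * (2*\<i>*(z + of_real m) + A$2$1 * (z + of_real m) - \<i> * A$2$2 * k)"
    using BC C ii by algebra
qed

lemma L2_zero: "L2_on S (\<lambda>_. 0)"
  by (simp add: L2_on_def set_integrable_def)

lemma H1_pos_zero: "H1_pos (\<lambda>_. 0) (\<lambda>_. 0)"
  by (simp add: H1_pos_def L2_zero)

lemma H1_neg_zero: "H1_neg (\<lambda>_. 0) (\<lambda>_. 0)"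
  by (simp add: H1_neg_def L2_zero)


lemma dirac_zero0[simp]: "dirac_expr m (\<lambda>_. 0) (\<lambda>_. 0) x = 0"
  by (simp add: dirac_expr_def vec2_eq mv2)

lemma mem_neg_only:
  assumes "(fm, fp) \<in> eigenspace_DA m A z"
    and "(2 * \<i>) *s (sigma1 *v 0) - A *v 0 = (2 * \<i>) *s (sigma1 *v fm 0) + A *v fm 0"
  shows "(fm, \<lambda>_. 0) \<in> eigenspace_DA m A z"
proof -
  obtain gm gp where E: "\<forall>x>0. fm x = 0" "H1_neg fm gm"
    "AE x in lborel. x < 0 \<longrightarrow> dirac_expr m fm gm x = z *s fm x"
    using assms(1) by (rule E_memD)
  have ex: "\<exists>gm gp. H1_neg fm gm \<and> H1_pos (\<lambda>_. 0) gp \<and>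
        (AE x in lborel. x < 0 \<longrightarrow> dirac_expr m fm gm x = z *s fm x) \<and>
        (AE x in lborel. x > 0 \<longrightarrow> dirac_expr m (\<lambda>_. 0) gp x = z *s (\<lambda>_. 0) x)"
    by (rule exI[of _ gm], rule exI[of _ "\<lambda>_. 0"], intro conjI E H1_pos_zero; simp add: dirac_zero0)
  show ?thesis unfolding eigenspace_DA_def
    using E(1) ex assms(2) by simp
qed

lemma mem_pos_only:
  assumes "(fm, fp) \<in> eigenspace_DA m A z"
    and "(2 * \<i>) *s (sigma1 *v fp 0) - A *v fp 0 = (2 * \<i>) *s (sigma1 *v 0) + A *v 0"
  shows "(\<lambda>_. 0, fp) \<in> eigenspace_DA m A z"
proof -
  obtain gm gp where E: "\<forall>x<0. fp x = 0" "H1_pos fp gp"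
    "AE x in lborel. x > 0 \<longrightarrow> dirac_expr m fp gp x = z *s fp x"
    using assms(1) by (rule E_memD)
  have ex: "\<exists>gm gp. H1_neg (\<lambda>_. 0) gm \<and> H1_pos fp gp \<and>
        (AE x in lborel. x < 0 \<longrightarrow> dirac_expr m (\<lambda>_. 0) gm x = z *s (\<lambda>_. 0) x) \<and>
        (AE x in lborel. x > 0 \<longrightarrow> dirac_expr m fp gp x = z *s fp x)"
    by (rule exI[of _ "\<lambda>_. 0"], rule exI[of _ gp], intro conjI E H1_neg_zero; simp add: dirac_zero0)
  show ?thesis unfolding eigenspace_DA_def
    using E(1) ex assms(2) by simp
qed

lemma mem_refl_np:
  assumes "(fm, fp) \<in> eigenspace_DA m A z"
    and "(2 * \<i>) *s (sigma1 *v Rf fm 0) - A *v Rf fm 0 = (2 * \<i>) *s (sigma1 *v 0) + A *v 0"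
  shows "(\<lambda>_. 0, Rf fm) \<in> eigenspace_DA m A z"
proof -
  obtain gm gp where E: "\<forall>x>0. fm x = 0" "H1_neg fm gm"
    "AE x in lborel. x < 0 \<longrightarrow> dirac_expr m fm gm x = z *s fm x"
    using assms(1) by (rule E_memD)
  have z: "\<forall>x<0. Rf fm x = 0" using E(1) by (simp add: vec2_eq)
  have ae: "AE x in lborel. x > 0 \<longrightarrow> dirac_expr m (Rf fm) (Rg gm) x = z *s Rf fm x"
    using dirac_reflect[OF E(3)] by (rule eventually_mono) auto
  have ex: "\<exists>gm gp. H1_neg (\<lambda>_. 0) gm \<and> H1_pos (Rf fm) gp \<and>
        (AE x in lborel. x < 0 \<longrightarrow> dirac_expr m (\<lambda>_. 0) gm x = z *s (\<lambda>_. 0) x) \<and>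
        (AE x in lborel. x > 0 \<longrightarrow> dirac_expr m (Rf fm) gp x = z *s Rf fm x)"
    by (rule exI[of _ "\<lambda>_. 0"], rule exI[of _ "Rg gm"], intro conjI ae neg_to_pos[OF E(2)] H1_neg_zero; simp add: dirac_zero0)
  show ?thesis unfolding eigenspace_DA_def
    using z ex assms(2) by simp
qed

lemma mem_refl_pn:
  assumes "(fm, fp) \<in> eigenspace_DA m A z"
    and "(2 * \<i>) *s (sigma1 *v 0) - A *v 0 = (2 * \<i>) *s (sigma1 *v Rf fp 0) + A *v Rf fp 0"
  shows "(Rf fp, \<lambda>_. 0) \<in> eigenspace_DA m A z"
proof -
  obtain gm gp where E: "\<forall>x<0. fp x = 0" "H1_pos fp gp"
    "AE x in lborel. x > 0 \<longrightarrow> dirac_expr m fp gp x = z *s fp x"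
    using assms(1) by (rule E_memD)
  have z: "\<forall>x>0. Rf fp x = 0" using E(1) by (simp add: vec2_eq)
  have ae: "AE x in lborel. x < 0 \<longrightarrow> dirac_expr m (Rf fp) (Rg gp) x = z *s Rf fp x"
    using dirac_reflect[OF E(3)] by (rule eventually_mono) auto
  have ex: "\<exists>gm gp. H1_neg (Rf fp) gm \<and> H1_pos (\<lambda>_. 0) gp \<and>
        (AE x in lborel. x < 0 \<longrightarrow> dirac_expr m (Rf fp) gm x = z *s Rf fp x) \<and>
        (AE x in lborel. x > 0 \<longrightarrow> dirac_expr m (\<lambda>_. 0) gp x = z *s (\<lambda>_. 0) x)"
    by (rule exI[of _ "Rg gp"], rule exI[of _ "\<lambda>_. 0"], intro conjI ae pos_to_neg[OF E(2)] H1_pos_zero; simp add: dirac_zero0)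
  show ?thesis unfolding eigenspace_DA_def
    using z ex assms(2) by simp
qed

lemma scaleP_0: "scaleP 0 p = 0"
  by (simp add: scaleP_def prod_eq_iff fun_eq_iff)

lemma pair_sum: "scaleP a (f1, g1) + scaleP b (f2, g2) = ((\<lambda>x. a *s f1 x + b *s f2 x), (\<lambda>x. a *s g1 x + b *s g2 x))"
  by (simp add: scaleP_def prod_eq_iff fun_eq_iff)

lemma csq: "(csqrt w)^2 = w" "Re (csqrt w) \<ge> 0"
  by (simp add: power2_csqrt) (rule Re_csqrt)

lemma eig_obtain:
  assumes "is_eigenvalue_DA m A z"
  obtains fm fp where "(fm, fp) \<in> eigenspace_DA m A z" "(fm, fp) \<noteq> 0"
  using assms unfolding is_eigenvalue_DA_def by auto

lemma eig_k:
  assumes m: "m \<noteq> 0" and ev: "is_eigenvalue_DA m A z"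
  shows "csqrt ((of_real m)^2 - z^2) \<noteq> 0"
proof
  assume k0: "csqrt ((of_real m)^2 - z^2) = 0"
  obtain fm fp where P: "(fm, fp) \<in> eigenspace_DA m A z" "(fm, fp) \<noteq> 0"
    using ev by (rule eig_obtain)
  have "fm = (\<lambda>_. 0) \<and> fp = (\<lambda>_. 0)"
    using E_elem(1)[OF m P(1) csq k0] .
  then have "(fm, fp) = 0" by (simp add: prod_eq_iff fun_eq_iff)
  then show False using P(2) by simp
qed

lemma vals_nz:
  fixes k :: complex
  assumes m: "m \<noteq> 0" and P: "(fm, fp) \<in> eigenspace_DA m A z" and nz: "(fm, fp) \<noteq> 0"
    and k2: "k^2 = (of_real m)^2 - z^2" and rk: "Re k \<ge> 0" and k0: "k \<noteq> 0"
  shows "fm 0 $1 \<noteq> 0 \<or> fp 0 $1 \<noteq> 0"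
proof (rule ccontr)
  assume "\<not> (fm 0 $1 \<noteq> 0 \<or> fp 0 $1 \<noteq> 0)"
  then have "fm 0 $1 = 0 * fm 0 $1" "fp 0 $1 = 0 * fp 0 $1" by auto
  then have "(fm, fp) = scaleP 0 (fm, fp)" by (rule E_scale[OF m P P k2 rk k0])
  then show False using nz by (simp add: scaleP_0)
qed

lemma diag2_comp[simp]: "diag2 a b $1$1 = a" "diag2 a b $1$2 = 0" "diag2 a b $2$1 = 0" "diag2 a b $2$2 = b"
  by (simp_all add: diag2_def)

lemma exc_Q:
  assumes m: "m \<noteq> 0" and ev: "is_eigenvalue_DA m A z" and a0: "\<alpha> \<noteq> 0" and A: "A = diag2 \<alpha> (- 4 / \<alpha>)"
  shows "\<alpha> * (z + of_real m) + 2 * csqrt ((of_real m)^2 - z^2) = 0"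
proof (rule ccontr)
  define k where "k = csqrt ((of_real m)^2 - z^2)"
  define s where "s = z + of_real m"
  assume Q: "\<alpha> * (z + of_real m) + 2 * csqrt ((of_real m)^2 - z^2) \<noteq> 0"
  then have Q': "\<alpha> * s + 2 * k \<noteq> 0" by (simp add: k_def s_def)
  obtain fm fp where P: "(fm, fp) \<in> eigenspace_DA m A z" "(fm, fp) \<noteq> 0"
    using ev by (rule eig_obtain)
  have k0: "k \<noteq> 0" using eig_k[OF m ev] by (simp add: k_def)
  note KV = key_vals[OF m P(1) csq[of "(of_real m)^2 - z^2", folded k_def] k0, folded s_def]
  have e1: "fp 0 $1 * (- (\<alpha> * s + 2 * k)) = fm 0 $1 * (\<alpha> * s + 2 * k)"
    using KV(1) by (simp add: A) algebra
  have e2: "fp 0 $1 * ((2 * \<i> / \<alpha>) * (\<alpha> * s + 2 * k)) = fm 0 $1 * ((2 * \<i> / \<alpha>) * (\<alpha> * s + 2 * k))"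
    using KV(2) a0 by (simp add: A field_simps)
  have "(2 * \<i> / \<alpha>) * (\<alpha> * s + 2 * k) \<noteq> 0" using a0 Q' by simp
  then have "fp 0 $1 = fm 0 $1" using e2 by simp
  moreover have "(fp 0 $1 + fm 0 $1) * (\<alpha> * s + 2 * k) = 0" using e1 by algebra
  then have "fp 0 $1 = - fm 0 $1" using Q' by (simp add: eq_neg_iff_add_eq_0)
  ultimately have "fm 0 $1 = 0" "fp 0 $1 = 0" by simp_all
  then show False using vals_nz[OF m P csq[of "(of_real m)^2 - z^2", folded k_def] k0] by simp
qed

lemma mat2_eq: "(M::'a^2^2) = N \<longleftrightarrow> M$1$1 = N$1$1 \<and> M$1$2 = N$1$2 \<and> M$2$1 = N$2$1 \<and> M$2$2 = N$2$2"
  by (simp add: vec2_eq)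

lemma nonexc:
  assumes m: "m \<noteq> 0" and ev: "is_eigenvalue_DA m A z"
    and nex: "\<not> (\<exists>\<alpha>. \<alpha> \<noteq> 0 \<and> A = diag2 \<alpha> (- 4 / \<alpha>))"
  shows "geom_mult_DA m A z = 1"
proof -
  define k where "k = csqrt ((of_real m)^2 - z^2)"
  define s where "s = z + of_real m"
  note k2 = csq(1)[of "(of_real m)^2 - z^2", folded k_def]
  note rk = csq(2)[of "(of_real m)^2 - z^2", folded k_def]
  have k0: "k \<noteq> 0" using eig_k[OF m ev] by (simp add: k_def)
  have s0: "s \<noteq> 0" using s_nz[OF k2 k0] by (simp add: s_def)
  obtain fm0 fp0 where P0: "(fm0, fp0) \<in> eigenspace_DA m A z" "(fm0, fp0) \<noteq> 0"
    using ev by (rule eig_obtain)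
  note KV0 = key_vals[OF m P0(1) k2 rk k0, folded s_def]
  have nz: "fm0 0 $1 \<noteq> 0 \<or> fp0 0 $1 \<noteq> 0" by (rule vals_nz[OF m P0 k2 rk k0])
  have all: "\<exists>c. q = scaleP c (fm0, fp0)" if q: "q \<in> eigenspace_DA m A z" for q
  proof -
    obtain fm fp where qq: "q = (fm, fp)" by (cases q)
    have P: "(fm, fp) \<in> eigenspace_DA m A z" using q qq by simp
    note KV = key_vals[OF m P k2 rk k0, folded s_def]
    define u' where "u' = fm0 0 $1"
    define w' where "w' = fp0 0 $1"
    define u where "u = fm 0 $1"
    define w where "w = fp 0 $1"
    define P1 where "P1 = -2*k - A$1$1 * s - \<i> * A$1$2 * k"
    define R1 where "R1 = 2*k + A$1$1 * s - \<i> * A$1$2 * k"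
    define P2 where "P2 = 2 * \<i> * s - A$2$1 * s - \<i> * A$2$2 * k"
    define R2 where "R2 = 2 * \<i> * s + A$2$1 * s - \<i> * A$2$2 * k"
    have e: "w' * P1 = u' * R1" "w' * P2 = u' * R2" "w * P1 = u * R1" "w * P2 = u * R2"
      using KV0 KV unfolding u'_def w'_def u_def w_def P1_def R1_def P2_def R2_def by simp_all
    have D: "u' * w - u * w' = 0"
    proof (rule ccontr)
      assume D: "u' * w - u * w' \<noteq> 0"
      have "(u' * w - u * w') * P1 = 0" "(u' * w - u * w') * R1 = 0"
           "(u' * w - u * w') * P2 = 0" "(u' * w - u * w') * R2 = 0"
        using e by algebra+
      then have z: "P1 = 0" "R1 = 0" "P2 = 0" "R2 = 0" using D by simp_all
      have "-2 * \<i> * A$1$2 * k = 0" using z(1,2) unfolding P1_def R1_def by algebra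
      then have a12: "A$1$2 = 0" using k0 by simp
      have a11: "A$1$1 * s = -2 * k" using z(2) a12 unfolding R1_def by algebra
      have "2 * A$2$1 * s = 0" using z(3,4) unfolding P2_def R2_def by algebra
      then have a21: "A$2$1 = 0" using s0 by simp
      have "2 * \<i> * (2 * s - A$2$2 * k) = 0" using z(3,4) a21 unfolding P2_def R2_def by algebra
      then have a22: "A$2$2 * k = 2 * s" by simp
      define \<alpha> where "\<alpha> = -2 * k / s"
      have a0: "\<alpha> \<noteq> 0" using k0 s0 by (simp add: \<alpha>_def)
      have "A$1$1 = \<alpha>" using a11 s0 by (simp add: \<alpha>_def field_simps)
      moreover have "A$2$2 = - 4 / \<alpha>" using a22 k0 s0 by (simp add: \<alpha>_def field_simps)
      ultimately have "A = diag2 \<alpha> (- 4 / \<alpha>)" using a12 a21 by (simp add: mat2_eq)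
      then show False using nex a0 by blast
    qed
    have "\<exists>c. u = c * u' \<and> w = c * w'"
    proof (cases "u' = 0")
      case False
      then show ?thesis using D by (intro exI[of _ "u / u'"]) (auto simp: field_simps)
    next
      case True
      then have w'0: "w' \<noteq> 0" using nz by (simp add: u'_def w'_def)
      then show ?thesis using D True by (intro exI[of _ "w / w'"]) (auto simp: field_simps)
    qed
    then obtain c where c: "u = c * u'" "w = c * w'" by blast
    have "(fm, fp) = scaleP c (fm0, fp0)"
      by (rule E_scale[OF m P P0(1) k2 rk k0]) (use c in \<open>simp_all add: u_def u'_def w_def w'_def\<close>)
    then show ?thesis using qq by blast
  qed
  show ?thesis unfolding geom_mult_DA_def
    by (rule dim1[OF P0(1) P0(2)]) (use all in blast)
qed

lemma exc_dim:
  assumes m: "m \<noteq> 0" and ev: "is_eigenvalue_DA m A z" and a0: "\<alpha> \<noteq> 0" and A: "A = diag2 \<alpha> (- 4 / \<alpha>)"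
  shows "geom_mult_DA m A z = 2"
proof -
  define k where "k = csqrt ((of_real m)^2 - z^2)"
  define s where "s = z + of_real m"
  note k2 = csq(1)[of "(of_real m)^2 - z^2", folded k_def]
  note rk = csq(2)[of "(of_real m)^2 - z^2", folded k_def]
  have k0: "k \<noteq> 0" using eig_k[OF m ev] by (simp add: k_def)
  have s0: "s \<noteq> 0" using s_nz[OF k2 k0] by (simp add: s_def)
  have Q: "\<alpha> * s + 2 * k = 0" using exc_Q[OF m ev a0 A] by (simp add: k_def s_def)
  have ii: "\<i> * \<i> = -1" by simp
  have bcu: "(2 * \<i>) *s (sigma1 *v 0) - A *v 0 = (2 * \<i>) *s (sigma1 *v u) + A *v u"
    if c: "-k * u $1 + \<i> * s * u $2 = 0" for u
  proof -
    have "s * (2 * \<i> * u$2 + \<alpha> * u$1) = 0" using c Q ii by algebra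
    then have 1: "2 * \<i> * u$2 + \<alpha> * u$1 = 0" using s0 by simp
    have "s * (2 * \<i> * \<alpha> * u$1 - 4 * u$2) = 0" using c Q ii by algebra
    then have "2 * \<i> * \<alpha> * u$1 - 4 * u$2 = 0" using s0 by simp
    then have 2: "2 * \<i> * u$1 + (- 4 / \<alpha>) * u$2 = 0" using a0 by (simp add: field_simps)
    show ?thesis unfolding BC_comp using 1 2 by (simp add: A algebra_simps)
  qed
  have bcw: "(2 * \<i>) *s (sigma1 *v w) - A *v w = (2 * \<i>) *s (sigma1 *v 0) + A *v 0"
    if c: "k * w $1 + \<i> * s * w $2 = 0" for w
  proof -
    have "s * (2 * \<i> * w$2 - \<alpha> * w$1) = 0" using c Q ii by algebra
    then have 1: "2 * \<i> * w$2 - \<alpha> * w$1 = 0" using s0 by simp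
    have "s * (2 * \<i> * \<alpha> * w$1 + 4 * w$2) = 0" using c Q ii by algebra
    then have "2 * \<i> * \<alpha> * w$1 + 4 * w$2 = 0" using s0 by simp
    then have 2: "2 * \<i> * w$1 - (- 4 / \<alpha>) * w$2 = 0" using a0 by (simp add: field_simps)
    show ?thesis unfolding BC_comp using 1 2 by (simp add: A algebra_simps)
  qed
  obtain fm0 fp0 where P0: "(fm0, fp0) \<in> eigenspace_DA m A z" "(fm0, fp0) \<noteq> 0"
    using ev by (rule eig_obtain)
  note C0 = E_elem(2)[OF m P0(1) k2 rk k0, folded s_def]
  have cu: "-k * fm0 0 $1 + \<i> * s * fm0 0 $2 = 0" and cw: "k * fp0 0 $1 + \<i> * s * fp0 0 $2 = 0"
    using C0 by blast+
  have nz: "fm0 0 $1 \<noteq> 0 \<or> fp0 0 $1 \<noteq> 0" by (rule vals_nz[OF m P0 k2 rk k0])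
  obtain p q where pE: "p \<in> eigenspace_DA m A z" and qE: "q \<in> eigenspace_DA m A z"
    and p0: "p \<noteq> 0" and pq: "\<And>c. q \<noteq> scaleP c p"
    and span: "\<And>r. r \<in> eigenspace_DA m A z \<Longrightarrow> \<exists>a b. r = scaleP a p + scaleP b q"
  proof (cases "fm0 0 $1 \<noteq> 0")
    case True
    define v where "v = fm0 0 $1"
    have p: "(fm0, \<lambda>_. 0) \<in> eigenspace_DA m A z" by (rule mem_neg_only[OF P0(1) bcu[OF cu]])
    have "k * Rf fm0 0 $1 + \<i> * s * Rf fm0 0 $2 = 0" using cu by (simp add: algebra_simps)
    then have q: "(\<lambda>_. 0, Rf fm0) \<in> eigenspace_DA m A z" by (rule mem_refl_np[OF P0(1) bcw])
    show ?thesis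
    proof (rule that[OF p q])
      show "(fm0, \<lambda>_. 0) \<noteq> 0" using True by (auto simp: prod_eq_iff fun_eq_iff intro!: exI[of _ 0])
      show "(\<lambda>_. 0, Rf fm0) \<noteq> scaleP c (fm0, \<lambda>_. 0)" for c
      proof
        assume "(\<lambda>_. 0, Rf fm0) = scaleP c (fm0, \<lambda>_. 0)"
        then have "Rf fm0 = (\<lambda>x. c *s 0)" by (simp add: scaleP_def)
        then have "Rf fm0 0 $1 = 0" by simp
        then show False using True by simp
      qed
      fix r assume r: "r \<in> eigenspace_DA m A z"
      obtain fm fp where rr: "r = (fm, fp)" by (cases r)
      have P: "(fm, fp) \<in> eigenspace_DA m A z" using r rr by simp
      define a where "a = fm 0 $1 / v"
      define b where "b = fp 0 $1 / v"
      have fa: "fm x = a *s fm0 x" for x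
        by (rule E_scale_both(1)[OF m P p k2 rk k0]) (use True in \<open>simp add: v_def a_def\<close>)
      have fb: "fp x = b *s Rf fm0 x" for x
        by (rule E_scale_both(2)[OF m P q k2 rk k0]) (use True in \<open>simp add: v_def b_def\<close>)
      have "r = scaleP a (fm0, \<lambda>_. 0) + scaleP b (\<lambda>_. 0, Rf fm0)"
        unfolding pair_sum rr by (simp add: fun_eq_iff fa fb)
      then show "\<exists>a b. r = scaleP a (fm0, \<lambda>_. 0) + scaleP b (\<lambda>_. 0, Rf fm0)" by blast
    qed
  next
    case False
    then have True: "fp0 0 $1 \<noteq> 0" using nz by simp
    define v where "v = fp0 0 $1"
    have q: "(\<lambda>_. 0, fp0) \<in> eigenspace_DA m A z" by (rule mem_pos_only[OF P0(1) bcw[OF cw]])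
    have "-k * Rf fp0 0 $1 + \<i> * s * Rf fp0 0 $2 = 0" using cw by simp algebra
    then have p: "(Rf fp0, \<lambda>_. 0) \<in> eigenspace_DA m A z" by (rule mem_refl_pn[OF P0(1) bcu])
    show ?thesis
    proof (rule that[OF p q])
      show "(Rf fp0, \<lambda>_. 0) \<noteq> 0"
      proof
        assume "(Rf fp0, \<lambda>_. 0) = 0"
        then have "Rf fp0 = 0" by (simp add: prod_eq_iff)
        then have "Rf fp0 0 $1 = 0" by simp
        then show False using True by simp
      qed
      show "(\<lambda>_. 0, fp0) \<noteq> scaleP c (Rf fp0, \<lambda>_. 0)" for c
      proof
        assume eq: "(\<lambda>_. 0, fp0) = scaleP c (Rf fp0, \<lambda>_. 0)"
        have "fp0 0 = c *s 0" using arg_cong[OF eq, of "\<lambda>p. snd p 0"] by (simp add: scaleP_def)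
        then have "fp0 0 $1 = 0" by simp
        then show False using True by simp
      qed
      fix r assume r: "r \<in> eigenspace_DA m A z"
      obtain fm fp where rr: "r = (fm, fp)" by (cases r)
      have P: "(fm, fp) \<in> eigenspace_DA m A z" using r rr by simp
      define a where "a = fm 0 $1 / v"
      define b where "b = fp 0 $1 / v"
      have fa: "fm x = a *s Rf fp0 x" for x
        by (rule E_scale_both(1)[OF m P p k2 rk k0]) (use True in \<open>simp add: v_def a_def\<close>)
      have fb: "fp x = b *s fp0 x" for x
        by (rule E_scale_both(2)[OF m P q k2 rk k0]) (use True in \<open>simp add: v_def b_def\<close>)
      have "r = scaleP a (Rf fp0, \<lambda>_. 0) + scaleP b (\<lambda>_. 0, fp0)"
        unfolding pair_sum rr by (simp add: fun_eq_iff fa fb)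
      then show "\<exists>a b. r = scaleP a (Rf fp0, \<lambda>_. 0) + scaleP b (\<lambda>_. 0, fp0)" by blast
    qed
  qed
  show ?thesis unfolding geom_mult_DA_def
    by (rule dim2[OF pE qE p0 pq span])
qed

theorem corollary3p5:
  fixes m :: real and A :: "complex^2^2" and z :: complex
  assumes "m \<noteq> 0"
    and "is_eigenvalue_DA m A z"
  shows "(\<not> (\<exists>\<alpha>. \<alpha> \<noteq> 0 \<and> A = diag2 \<alpha> (- 4 / \<alpha>)) \<longrightarrow> geom_mult_DA m A z = 1) \<and>
         ((\<exists>\<alpha>. \<alpha> \<noteq> 0 \<and> A = diag2 \<alpha> (- 4 / \<alpha>)) \<longrightarrow>
            geom_mult_DA m A z = 2 \<and> (\<forall>w. is_eigenvalue_DA m A w \<longrightarrow> w = z))"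
proof (intro conjI impI)
  assume "\<not> (\<exists>\<alpha>. \<alpha> \<noteq> 0 \<and> A = diag2 \<alpha> (- 4 / \<alpha>))"
  then show "geom_mult_DA m A z = 1" by (rule nonexc[OF assms])
next
  assume "\<exists>\<alpha>. \<alpha> \<noteq> 0 \<and> A = diag2 \<alpha> (- 4 / \<alpha>)"
  then obtain \<alpha> where a0: "\<alpha> \<noteq> 0" and A: "A = diag2 \<alpha> (- 4 / \<alpha>)" by blast
  show "geom_mult_DA m A z = 2" by (rule exc_dim[OF assms a0 A])
  have key: "\<alpha>^2 * (x + of_real m) = 4 * (of_real m - x)" if ev: "is_eigenvalue_DA m A x" for x
  proof -
    define k where "k = csqrt ((of_real m)^2 - x^2)"
    note k2 = csq(1)[of "(of_real m)^2 - x^2", folded k_def]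
    have k0: "k \<noteq> 0" using eig_k[OF assms(1) ev] by (simp add: k_def)
    have s0: "x + of_real m \<noteq> 0" using s_nz[OF k2 k0] .
    have Q: "\<alpha> * (x + of_real m) + 2 * k = 0" using exc_Q[OF assms(1) ev a0 A] by (simp add: k_def)
    have "(x + of_real m) * (\<alpha>^2 * (x + of_real m) - 4 * (of_real m - x)) = 0"
      using Q k2 by algebra
    then show ?thesis using s0 by simp
  qed
  show "\<forall>w. is_eigenvalue_DA m A w \<longrightarrow> w = z"
  proof (intro allI impI)
    fix w assume ew: "is_eigenvalue_DA m A w"
    have kz: "\<alpha>^2 * (z + of_real m) = 4 * (of_real m - z)" by (rule key[OF assms(2)])
    have kw: "\<alpha>^2 * (w + of_real m) = 4 * (of_real m - w)" by (rule key[OF ew])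
    have "(\<alpha>^2 + 4) * (w - z) = 0" using kz kw by algebra
    moreover have "\<alpha>^2 + 4 \<noteq> 0"
    proof
      assume h: "\<alpha>^2 + 4 = 0"
      have "8 * complex_of_real m = 0" using kz h by algebra
      then show False using assms(1) by simp
    qed
    ultimately show "w = z" by simp
  qed
qed

end
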